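(* Let $p > m \geq 1$ be integers and let $\mathbf{x} \in \mathbb{R}^p$ be a fixed nonzero vector. Let $\mathbf{e}_1, \ldots, \mathbf{e}_m$ be independent random vectors in $\mathbb{R}^p$, each distributed as $\mathcal{N}(0, I_{p\times p})$, let $E \in \mathbb{R}^{p\times m}$ be the matrix with columns $\mathbf{e}_1,\ldots,\mathbf{e}_m$, and let $P = E(E^TE)^{-1}E^T$ (the orthogonal projection onto the span of $\mathbf{e}_1,\ldots,\mathbf{e}_m$). Define the reflection operator $R_{\mathbf{x}}:\mathbb{R}^p\to\mathbb{R}^p$ by $$R_{\mathbf{x}}(\mathbf{y}) = 2\langle \mathbf{y}, \hat{\mathbf{x}}\rangle \hat{\mathbf{x}} - \mathbf{y}, \qquad \hat{\mathbf{x}} = \frac{\mathbf{x}}{\|\mathbf{x}\|}.$$ Then the random vector $P\mathbf{x}$ has the same distribution as the random vector $R_{\mathbf{x}}(P\mathbf{x})$.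
   Context: $\langle\cdot,\cdot\rangle$ and $\|\cdot\|$ denote the standard Euclidean inner product and norm on $\mathbb{R}^p$. $E^TE$ is almost surely invertible, so $P$ is almost surely well defined. *)

theory Defs
  imports "HOL-Probability.Probability"
begin

definition std_gauss_vec :: "(real^'n::finite) measure" where
  "std_gauss_vec = distr (PiM UNIV (\<lambda>_::'n. std_normal_distribution)) borel (\<lambda>f. \<chi> i. f i)"

definition col_matrix :: "('m::finite \<Rightarrow> real^'p::finite) \<Rightarrow> real^'m^'p" where
  "col_matrix e = (\<chi> i j. e j $ i)"

definition proj_mat :: "real^'m::finite^'p::finite \<Rightarrow> real^'p^'p" where
  "proj_mat E = E ** matrix_inv (transpose E ** E) ** transpose E"

definition reflect :: "real^'p::finite \<Rightarrow> real^'p \<Rightarrow> real^'p" where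
  "reflect x y = (let xh = x /\<^sub>R norm x in (2 * (y \<bullet> xh)) *\<^sub>R xh - y)"

end

theory Submission
  imports Defs
begin

lemma lborel_orth_wo:
  fixes f :: "real^'n::{finite,wellorder} \<Rightarrow> real^'n::_"
  assumes f: "orthogonal_transformation f"
  shows "distr lborel borel f = lborel"
proof (rule lborel_eqI[symmetric])
  have lin: "linear f" using f orthogonal_transformation_linear by blast
  have cf: "continuous_on UNIV f" using lin linear_continuous_on linear_linear by blast
  have [measurable]: "f \<in> borel_measurable borel" using cf borel_measurable_continuous_onI by blast
  let ?g = "inv f"
  have g: "orthogonal_transformation ?g" using f orthogonal_transformation_inv by blast
  have bf: "bij f" using f orthogonal_transformation_bij by blast
  fix l u :: "real^'n::_" assume le: "\<And>b. b \<in> Basis \<Longrightarrow> l \<bullet> b \<le> u \<bullet> b"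
  have eq: "f -` box l u = ?g ` box l u"
    using bf by (metis bij_vimage_eq_inv_image)
  have op: "open (f -` box l u)" using cf open_vimage by blast
  have bs: "f -` box l u \<in> sets borel" using op by simp
  have lm: "box l u \<in> lmeasurable" by simp
  have m1: "measure lebesgue (?g ` box l u) = measure lebesgue (box l u)"
    using measure_orthogonal_image[OF g lm] .
  have lm2: "?g ` box l u \<in> lmeasurable" using measurable_orthogonal_image[OF g lm] .
  have "emeasure lborel (f -` box l u) = emeasure lebesgue (f -` box l u)"
    using bs by simp
  also have "\<dots> = ennreal (measure lebesgue (f -` box l u))"
    using lm2 eq by (simp add: emeasure_eq_measure2)
  also have "\<dots> = ennreal (measure lebesgue (box l u))" using m1 eq by simp
  also have "\<dots> = emeasure lebesgue (box l u)" using lm by (simp add: emeasure_eq_measure2)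
  also have "\<dots> = emeasure lborel (box l u)" by simp
  finally have "emeasure lborel (f -` box l u) = emeasure lborel (box l u)" .
  then show "emeasure (distr lborel borel f) (box l u) = (\<Prod>b\<in>Basis. (u - l) \<bullet> b)"
    using le by (simp add: emeasure_distr emeasure_lborel_box_eq)
qed simp


typedef ('p::finite) ix = "{..<CARD('p)}" morphisms rep_ix abs_ix
  by (rule exI[of _ 0]) simp

instance ix :: (finite) finite
proof
  have "(UNIV :: 'a ix set) = abs_ix ` {..<CARD('a)}"
    using type_definition.Abs_image[OF type_definition_ix[where 'p='a]] by simp
  then show "finite (UNIV :: 'a ix set)" by (metis finite_imageI finite_lessThan)
qed

instantiation ix :: (finite) linorder
begin
definition less_eq_ix :: "'a ix \<Rightarrow> 'a ix \<Rightarrow> bool" where "less_eq_ix a b = (rep_ix a \<le> rep_ix b)"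
definition less_ix :: "'a ix \<Rightarrow> 'a ix \<Rightarrow> bool" where "less_ix a b = (rep_ix a < rep_ix b)"
instance by standard (auto simp: less_eq_ix_def less_ix_def rep_ix_inject)
end

instance ix :: (finite) wellorder
proof
  fix P :: "'a ix \<Rightarrow> bool" and a :: "'a ix"
  assume H: "\<And>x. (\<And>y. y < x \<Longrightarrow> P y) \<Longrightarrow> P x"
  have "\<forall>a. rep_ix a = n \<longrightarrow> P a" for n
  proof (induction n rule: less_induct)
    case (less n)
    then show ?case using H less_ix_def by metis
  qed
  then show "P a" by blast
qed

lemma card_ix: "CARD('p::finite ix) = CARD('p)"
proof -
  have "bij_betw rep_ix (UNIV :: 'p ix set) {..<CARD('p)}"
    by (metis bij_betw_def inj_on_def rep_ix_inject type_definition.Rep_range type_definition_ix)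
  then show ?thesis using bij_betw_same_card by fastforce
qed

lemma prod_Basis_cart: "(\<Prod>b\<in>Basis. (v::real^'n) \<bullet> b) = (\<Prod>i\<in>UNIV. v $ i)"
  by (simp add: Basis_vec_def cart_eq_inner_axis axis_eq_axis prod.UNION_disjoint)

lemma Basis_le_cart: "(\<forall>b\<in>Basis. (l::real^'n) \<bullet> b \<le> u \<bullet> b) \<longleftrightarrow> (\<forall>i. l $ i \<le> u $ i)"
  by (auto simp: Basis_vec_def cart_eq_inner_axis)

lemma linear_borel: "linear (g :: 'a::euclidean_space \<Rightarrow> 'b::euclidean_space) \<Longrightarrow> g \<in> borel_measurable borel"
  by (simp add: borel_measurable_continuous_onI linear_continuous_on linear_linear)

lemma lborel_reindex:
  fixes \<pi> :: "'q::finite \<Rightarrow> 'p::finite"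
  assumes bij: "bij \<pi>"
  shows "distr lborel borel (\<lambda>v::real^'p. (\<chi> k. v $ \<pi> k) :: real^'q) = lborel"
proof (rule lborel_eqI[symmetric])
  let ?T = "(\<lambda>v::real^'p. (\<chi> k. v $ \<pi> k) :: real^'q)"
  have lin: "linear ?T" by (rule linearI) (simp_all add: vec_eq_iff)
  note [measurable] = linear_borel[OF lin]
  fix l u :: "real^'q" assume le: "\<And>b. b \<in> Basis \<Longrightarrow> l \<bullet> b \<le> u \<bullet> b"
  then have le': "\<forall>i. l $ i \<le> u $ i" using Basis_le_cart by blast
  let ?li = "(\<chi> i. l $ inv \<pi> i) :: real^'p" and ?ui = "(\<chi> i. u $ inv \<pi> i) :: real^'p"
  have eq: "?T -` box l u = box ?li ?ui"
  proof -
    have "v \<in> ?T -` box l u \<longleftrightarrow> v \<in> box ?li ?ui" for v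
    proof -
      have "v \<in> ?T -` box l u \<longleftrightarrow> (\<forall>k. l $ k < v $ \<pi> k \<and> v $ \<pi> k < u $ k)"
        by (simp add: mem_box_cart)
      also have "\<dots> \<longleftrightarrow> (\<forall>i. l $ inv \<pi> i < v $ i \<and> v $ i < u $ inv \<pi> i)"
        using bij by (metis bij_inv_eq_iff)
      finally show ?thesis by (simp add: mem_box_cart)
    qed
    then show ?thesis by blast
  qed
  have le2: "\<forall>b\<in>Basis. ?li \<bullet> b \<le> ?ui \<bullet> b" using le' Basis_le_cart[of ?li ?ui] by simp
  have "(\<Prod>i\<in>UNIV. (?ui - ?li) $ i) = (\<Prod>i\<in>UNIV. u $ inv \<pi> i - l $ inv \<pi> i)" by simp
  also have "\<dots> = (\<Prod>k\<in>UNIV. u $ k - l $ k)"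
  proof -
    have "bij_betw (inv \<pi>) UNIV UNIV" using bij bij_imp_bij_inv by blast
    then show ?thesis using prod.reindex_bij_betw[of "inv \<pi>" UNIV UNIV "\<lambda>k. u $ k - l $ k"] by simp
  qed
  finally have pe: "(\<Prod>i\<in>UNIV. (?ui - ?li) $ i) = (\<Prod>k\<in>UNIV. (u - l) $ k)" by simp
  show "emeasure (distr lborel borel ?T) (box l u) = (\<Prod>b\<in>Basis. (u - l) \<bullet> b)"
    using le2 pe by (simp add: emeasure_distr eq emeasure_lborel_box_eq prod_Basis_cart)
qed simp



lemma norm_reindex:
  fixes \<pi> :: "'q::finite \<Rightarrow> 'p::finite"
  assumes bij: "bij \<pi>"
  shows "norm ((\<chi> k. v $ \<pi> k) :: real^'q) = norm (v::real^'p)"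
proof -
  have "(\<Sum>k\<in>UNIV. (norm (v $ \<pi> k))\<^sup>2) = (\<Sum>i\<in>UNIV. (norm (v $ i))\<^sup>2)"
    using sum.reindex_bij_betw[of \<pi> UNIV UNIV "\<lambda>i. (norm (v $ i))\<^sup>2"] bij by simp
  then show ?thesis by (simp add: norm_vec_def L2_set_def)
qed

lemma lborel_orth:
  fixes f :: "real^'p::finite \<Rightarrow> real^'p"
  assumes f: "orthogonal_transformation f"
  shows "distr lborel borel f = lborel"
proof -
  have "CARD('p ix) = CARD('p)" by (rule card_ix)
  then obtain \<pi> :: "'p ix \<Rightarrow> 'p" where bij: "bij \<pi>"
    using finite_same_card_bij[of "UNIV :: 'p ix set" "UNIV :: 'p set"] by auto
  define T :: "real^'p \<Rightarrow> real^'p ix" where "T v = (\<chi> k. v $ \<pi> k)" for v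
  define Ti :: "real^'p ix \<Rightarrow> real^'p" where "Ti w = (\<chi> i. w $ inv \<pi> i)" for w
  have linT: "linear T" unfolding T_def by (rule linearI) (simp_all add: vec_eq_iff)
  have linTi: "linear Ti" unfolding Ti_def by (rule linearI) (simp_all add: vec_eq_iff)
  have bij': "bij (inv \<pi>)" using bij bij_imp_bij_inv by blast
  have TiT: "Ti (T v) = v" for v using bij by (simp add: T_def Ti_def vec_eq_iff bij_is_surj surj_f_inv_f bij_is_inj inv_f_f)
  have TTi: "T (Ti w) = w" for w using bij by (simp add: T_def Ti_def vec_eq_iff bij_is_surj surj_f_inv_f bij_is_inj inv_f_f)
  have nT: "norm (T v) = norm v" for v unfolding T_def using norm_reindex[OF bij] .
  have nTi: "norm (Ti w) = norm w" for w unfolding Ti_def using norm_reindex[OF bij'] .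
  note [measurable] = linear_borel[OF linT] linear_borel[OF linTi]
  have lin_f: "linear f" using f orthogonal_transformation_linear by blast
  note [measurable] = linear_borel[OF lin_f]
  define Q where "Q = T \<circ> f \<circ> Ti"
  have linQ: "linear Q" unfolding Q_def using linT linTi lin_f by (simp add: linear_compose)
  have "orthogonal_transformation Q"
    unfolding orthogonal_transformation using linQ f nT nTi
    by (simp add: Q_def orthogonal_transformation)
  then have DQ: "distr lborel borel Q = lborel" by (rule lborel_orth_wo)
  note [measurable] = linear_borel[OF linQ]
  have DT: "distr lborel borel T = lborel" unfolding T_def by (rule lborel_reindex[OF bij])
  have DTi: "distr lborel borel Ti = lborel"
  proof -
    have "distr lborel borel Ti = distr (distr lborel borel T) borel Ti" by (simp add: DT)
    also have "\<dots> = distr lborel borel (Ti \<circ> T)" by (simp add: distr_distr)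
    also have "Ti \<circ> T = id" using TiT by auto
    finally show ?thesis by (simp add: distr_id2)
  qed
  have feq: "f = Ti \<circ> Q \<circ> T" using TiT by (auto simp: Q_def)
  have "distr lborel borel f = distr (distr (distr lborel borel T) borel Q) borel Ti"
    by (simp add: distr_distr feq comp_assoc)
  also have "\<dots> = lborel" by (simp add: DT DQ DTi)
  finally show ?thesis .
qed



lemma vec_meas:
  fixes f :: "'a \<Rightarrow> 'b::euclidean_space ^ 'n"
  assumes "\<And>i. (\<lambda>x. f x $ i) \<in> borel_measurable M"
  shows "f \<in> borel_measurable M"
proof (subst borel_measurable_euclidean_space, intro ballI)
  fix b :: "'b^'n" assume "b \<in> Basis"
  then obtain i u where b: "b = axis i u" "u \<in> Basis" by (auto simp: Basis_vec_def)
  have "(\<lambda>x. f x $ i \<bullet> u) \<in> borel_measurable M" using assms[of i] by measurable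
  then show "(\<lambda>x. f x \<bullet> b) \<in> borel_measurable M" by (simp add: b inner_axis)
qed

lemma Basis_vec_range: "(Basis :: (real^'n) set) = range (\<lambda>i. axis i 1)"
  by (auto simp: Basis_vec_def)

lemma prod_Basis_vec: "(\<Prod>b\<in>(Basis :: (real^'n) set). g b) = (\<Prod>i\<in>UNIV. g (axis i 1))"
proof -
  have "inj (\<lambda>i::'n. axis i (1::real))" by (auto simp: inj_on_def axis_eq_axis)
  then show ?thesis by (simp add: Basis_vec_range prod.reindex)
qed

lemma gauss_meas: "(\<lambda>f. \<chi> i. f i) \<in> measurable (PiM UNIV (\<lambda>_::'n::finite. M)) (borel :: (real^'n) measure)"
  if "sets M = sets borel"
  apply (rule vec_meas)
  using that by (simp add: measurable_cong_sets[OF refl that[symmetric]] measurable_component_singleton)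

definition gdens :: "real^'n::finite \<Rightarrow> real" where
  "gdens y = (\<Prod>i\<in>UNIV. std_normal_density (y $ i))"

lemma gdens_meas[measurable]: "gdens \<in> borel_measurable borel"
  unfolding gdens_def by measurable

lemma prob_std_gauss_vec: "prob_space (std_gauss_vec :: (real^'n::finite) measure)"
  unfolding std_gauss_vec_def
  by (intro prob_space.prob_space_distr prob_space_PiM prob_space_normal_density gauss_meas) simp_all

lemma gauss_density: "(std_gauss_vec :: (real^'n::finite) measure) = density lborel (\<lambda>y. ennreal (gdens y))"
proof (rule measure_eqI_generator_eq[where E="range (\<lambda>(a, b). box a b)" and \<Omega>=UNIV
        and A="\<lambda>n::nat. box (- (real n *\<^sub>R One)) (real n *\<^sub>R One)"])
  show "Int_stable (range (\<lambda>(a, b). box a b :: (real^'n) set))"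
    by (auto simp: Int_stable_def box_Int_box)
  show "range (\<lambda>(a, b). box a b :: (real^'n) set) \<subseteq> Pow UNIV" by simp
  show "sets (std_gauss_vec :: (real^'n) measure) = sigma_sets UNIV (range (\<lambda>(a, b). box a b))"
    by (simp add: std_gauss_vec_def borel_eq_box)
  show "sets (density lborel (\<lambda>y. ennreal (gdens y)) :: (real^'n) measure) = sigma_sets UNIV (range (\<lambda>(a, b). box a b))"
    by (simp add: borel_eq_box)
  show "range (\<lambda>n::nat. box (- (real n *\<^sub>R One)) (real n *\<^sub>R One) :: (real^'n) set) \<subseteq> range (\<lambda>(a, b). box a b)"
    by auto
  show "(\<Union>n::nat. box (- (real n *\<^sub>R One)) (real n *\<^sub>R One) :: (real^'n) set) = UNIV"
    by (rule UN_box_eq_UNIV)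
  show "emeasure std_gauss_vec (box (- (real n *\<^sub>R One)) (real n *\<^sub>R One) :: (real^'n) set) \<noteq> \<infinity>" for n
    using prob_std_gauss_vec finite_measure.emeasure_finite prob_space_def by (metis infinity_ennreal_def)
  fix X :: "(real^'n) set" assume "X \<in> range (\<lambda>(a, b). box a b)"
  then obtain l u where X: "X = box l u" by auto
  let ?N = "density lborel std_normal_density"
  interpret product_sigma_finite "\<lambda>_::'n. ?N"
    unfolding product_sigma_finite_def
    by (simp add: prob_space_normal_density prob_space_imp_sigma_finite)
  have sN: "sets ?N = sets borel" by simp
  have vm: "(\<lambda>f. \<chi> i. f i) \<in> measurable (PiM UNIV (\<lambda>_::'n. ?N)) (borel :: (real^'n) measure)"
    using gauss_meas[OF sN] .
  have pre: "(\<lambda>f. \<chi> i. f i) -` box l u \<inter> space (PiM UNIV (\<lambda>_::'n. ?N)) = PiE UNIV (\<lambda>i. {l$i<..<u$i})"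
    by (auto simp: space_PiM mem_box_cart PiE_def Pi_def extensional_def)
  have "emeasure std_gauss_vec X = emeasure (PiM UNIV (\<lambda>_::'n. ?N)) (PiE UNIV (\<lambda>i. {l$i<..<u$i}))"
    unfolding std_gauss_vec_def X using vm pre by (simp add: emeasure_distr)
  also have "\<dots> = (\<Prod>i\<in>UNIV. emeasure ?N {l$i<..<u$i})"
    by (rule emeasure_PiM) auto
  also have "\<dots> = (\<Prod>i\<in>UNIV. \<integral>\<^sup>+t. ennreal (std_normal_density t * indicator {l$i<..<u$i} t) \<partial>lborel)"
    by (intro prod.cong refl) (simp add: emeasure_density ennreal_mult' ennreal_indicator)
  also have "\<dots> = (\<integral>\<^sup>+y. ennreal (\<Prod>i\<in>UNIV. std_normal_density (y $ i) * indicator {l$i<..<u$i} (y $ i)) \<partial>lborel)"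
    using nn_integral_lborel_prod[of "\<lambda>b t. std_normal_density t * indicator {l \<bullet> b<..<u \<bullet> b} t"]
    by (simp add: prod_Basis_vec cart_eq_inner_axis[symmetric] prod_ennreal)
  also have "\<dots> = (\<integral>\<^sup>+y. ennreal (gdens y) * indicator X y \<partial>lborel)"
  proof (intro nn_integral_cong)
    fix y :: "real^'n"
    have "(\<Prod>i\<in>UNIV. std_normal_density (y $ i) * indicator {l$i<..<u$i} (y $ i))
        = gdens y * (\<Prod>i\<in>UNIV. indicator {l$i<..<u$i} (y $ i))"
      by (simp add: gdens_def prod.distrib)
    moreover have "(\<Prod>i\<in>UNIV. indicator {l$i<..<u$i} (y $ i) :: real) = indicator X y"
      by (auto simp: X mem_box_cart indicator_def prod_zero_iff)
    ultimately show "ennreal (\<Prod>i\<in>UNIV. std_normal_density (y $ i) * indicator {l$i<..<u$i} (y $ i))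
        = ennreal (gdens y) * indicator X y"
      by (simp add: ennreal_mult' ennreal_indicator gdens_def prod_nonneg)
  qed
  also have "\<dots> = emeasure (density lborel (\<lambda>y. ennreal (gdens y))) X"
    by (simp add: emeasure_density X)
  finally show "emeasure std_gauss_vec X = emeasure (density lborel (\<lambda>y. ennreal (gdens y))) X" .
qed



lemma gdens_norm: "gdens (y::real^'n::finite) = (1 / sqrt (2 * pi)) ^ CARD('n) * exp (- (norm y)\<^sup>2 / 2)"
proof -
  have n2: "(norm y)\<^sup>2 = (\<Sum>i\<in>UNIV. (y $ i)\<^sup>2)"
    by (simp add: norm_vec_def L2_set_def sum_nonneg)
  have "gdens y = (\<Prod>i\<in>UNIV. (1 / sqrt (2 * pi)) * exp (- (y $ i)\<^sup>2 / 2))"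
    by (simp add: gdens_def std_normal_density_def)
  also have "\<dots> = (1 / sqrt (2 * pi)) ^ CARD('n) * exp (\<Sum>i\<in>UNIV. - (y $ i)\<^sup>2 / 2)"
    by (simp only: prod.distrib prod_constant) (simp add: exp_sum)
  also have "(\<Sum>i\<in>UNIV. - (y $ i)\<^sup>2 / 2) = - (norm y)\<^sup>2 / 2"
    by (simp add: n2 sum_negf sum_divide_distrib)
  finally show ?thesis .
qed

lemma gauss_orth:
  fixes f :: "real^'p::finite \<Rightarrow> real^'p"
  assumes f: "orthogonal_transformation f"
  shows "distr std_gauss_vec borel f = std_gauss_vec"
proof -
  have lin_f: "linear f" using f orthogonal_transformation_linear by blast
  note [measurable] = linear_borel[OF lin_f]
  have nf: "norm (f y) = norm y" for y using f orthogonal_transformation by blast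
  have G: "gdens (f y) = gdens y" for y by (simp add: gdens_norm nf)
  have "density lborel (\<lambda>y. ennreal (gdens y)) = density (distr lborel borel f) (\<lambda>y. ennreal (gdens y))"
    by (simp add: lborel_orth[OF f])
  also have "\<dots> = distr (density lborel (\<lambda>y. ennreal (gdens (f y)))) borel f"
    by (rule density_distr) measurable
  also have "\<dots> = distr (density lborel (\<lambda>y. ennreal (gdens y))) borel f" by (simp add: G)
  finally show ?thesis by (simp add: gauss_density[symmetric])
qed



lemma nth_meas[measurable (raw)]:
  fixes f :: "'a \<Rightarrow> 'b::euclidean_space ^ 'n"
  assumes "f \<in> borel_measurable M"
  shows "(\<lambda>x. f x $ i) \<in> borel_measurable M"
proof -
  have "(\<lambda>v::'b^'n. v $ i) \<in> borel_measurable borel"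
    by (intro borel_measurable_continuous_onI continuous_intros)
  then show ?thesis using assms by (rule measurable_compose[rotated])
qed

lemma mm_meas[measurable (raw)]:
  fixes f :: "'a \<Rightarrow> real^'n^'m" and g :: "'a \<Rightarrow> real^'k^'n"
  assumes [measurable]: "f \<in> borel_measurable M" "g \<in> borel_measurable M"
  shows "(\<lambda>x. f x ** g x) \<in> borel_measurable M"
  by (intro vec_meas) (simp add: matrix_matrix_mult_def)

lemma mv_meas[measurable (raw)]:
  fixes f :: "'a \<Rightarrow> real^'n^'m" and g :: "'a \<Rightarrow> real^'n"
  assumes [measurable]: "f \<in> borel_measurable M" "g \<in> borel_measurable M"
  shows "(\<lambda>x. f x *v g x) \<in> borel_measurable M"
  by (intro vec_meas) (simp add: matrix_vector_mult_def)

lemma tr_meas[measurable (raw)]: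
  fixes f :: "'a \<Rightarrow> real^'n^'m"
  assumes [measurable]: "f \<in> borel_measurable M"
  shows "(\<lambda>x. transpose (f x)) \<in> borel_measurable M"
  by (intro vec_meas) (simp add: transpose_def)

lemma det_meas[measurable]: "(det :: real^'n::finite^'n \<Rightarrow> real) \<in> borel_measurable borel"
  unfolding det_def by measurable

definition minv_formula :: "real^'n::finite^'n \<Rightarrow> real^'n^'n" where
  "minv_formula A = (\<chi> r c. det ((\<chi> i j. if j = r then axis c 1 $ i else A$i$j) :: real^'n^'n) / det A)"

lemma minv_formula_meas: "minv_formula \<in> borel_measurable borel"
proof -
  have "(\<lambda>A::real^'n^'n. det ((\<chi> i j. if j = r then axis c 1 $ i else A$i$j) :: real^'n^'n)) \<in> borel_measurable borel" for r c :: "'n::finite"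
  proof -
    have "(\<lambda>A::real^'n^'n. ((\<chi> i j. if j = r then axis c 1 $ i else A$i$j) :: real^'n^'n)) \<in> borel_measurable borel"
      by (intro vec_meas) simp
    then show ?thesis using det_meas by (rule measurable_compose)
  qed
  note [measurable] = this
  show ?thesis unfolding minv_formula_def
    by (intro vec_meas) simp
qed

lemma matrix_inv_formula:
  fixes A :: "real^'n::finite^'n"
  shows "matrix_inv A = (if det A \<noteq> 0 then minv_formula A else (SOME A'. False))"
proof (cases "det A \<noteq> 0")
  case True
  then have "invertible A" by (simp add: invertible_det_nz)
  then have "\<exists>A'. A ** A' = mat 1 \<and> A' ** A = mat 1" by (simp add: invertible_def)
  then have B: "A ** matrix_inv A = mat 1" unfolding matrix_inv_def by (rule someI2_ex) blast
  have "matrix_inv A $ r $ c = minv_formula A $ r $ c" for r c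
  proof -
    have "A *v (matrix_inv A *v axis c 1) = axis c 1"
      by (simp add: matrix_vector_mul_assoc B)
    then have "matrix_inv A *v axis c 1 = (\<chi> k. det(\<chi> i j. if j=k then axis c 1 $i else A$i$j) / det A)"
      using cramer[OF True] by blast
    moreover have "(matrix_inv A *v axis c 1) $ r = matrix_inv A $ r $ c"
      by (simp add: matrix_vector_mult_def axis_def if_distrib cong: if_cong)
    ultimately show ?thesis by (simp add: minv_formula_def)
  qed
  then show ?thesis using True by (simp add: vec_eq_iff)
next
  case False
  then have "\<not> invertible A" by (simp add: invertible_det_nz)
  then have "(\<lambda>A'. A ** A' = mat 1 \<and> A' ** A = mat 1) = (\<lambda>_. False)"
    by (auto simp: invertible_def)
  then show ?thesis using False by (simp add: matrix_inv_def)
qed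

lemma matrix_inv_meas[measurable]: "(matrix_inv :: real^'n::finite^'n \<Rightarrow> real^'n^'n) \<in> borel_measurable borel"
proof -
  note [measurable] = minv_formula_meas
  have "(\<lambda>A::real^'n^'n. if det A \<noteq> 0 then minv_formula A else (SOME A'. False)) \<in> borel_measurable borel"
    by measurable
  then show ?thesis by (subst matrix_inv_formula[abs_def]) 
qed

lemma F_meas: "(\<lambda>f. proj_mat (col_matrix f) *v x) \<in> borel_measurable (PiM UNIV (\<lambda>_::'m::finite. (borel :: (real^'p::finite) measure)))"
proof -
  have [measurable]: "(\<lambda>f. col_matrix f) \<in> borel_measurable (PiM UNIV (\<lambda>_::'m::finite. (borel :: (real^'p::finite) measure)))"
    unfolding col_matrix_def by (intro vec_meas) (simp add: measurable_component_singleton)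
  show ?thesis unfolding proj_mat_def
    by measurable
qed



lemma refl_props:
  fixes x :: "real^'p::finite"
  assumes x: "x \<noteq> 0"
  defines "u \<equiv> x /\<^sub>R norm x"
  defines "H \<equiv> (\<chi> i j. 2 * u$i * u$j - (if i = j then 1 else 0)) :: real^'p^'p"
  shows "\<And>y. H *v y = reflect x y"
    and "transpose H = H"
    and "H ** H = mat 1"
    and "H *v x = x"
    and "orthogonal_transformation ((*v) H)"
proof -
  have uu: "u \<bullet> u = 1" using x by (simp add: u_def inner_commute dot_square_norm power2_eq_square[symmetric])
  have xu: "x \<bullet> u = norm x" using x by (simp add: u_def dot_square_norm power2_eq_square)
  have nxu: "norm x *\<^sub>R u = x" using x by (simp add: u_def)
  show Hv: "H *v y = reflect x y" for y
  proof -
    have "(H *v y) $ i = reflect x y $ i" for i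
    proof -
      have "(H *v y) $ i = (\<Sum>j\<in>UNIV. (2 * u$i * u$j - (if i = j then 1 else 0)) * y$j)"
        by (simp add: H_def matrix_vector_mult_def)
      also have "\<dots> = 2 * u$i * (\<Sum>j\<in>UNIV. u$j * y$j) - y$i"
      proof -
        have "(\<lambda>j. (2 * u$i * u$j - (if i = j then 1 else 0)) * y$j) = (\<lambda>j. 2 * u$i * (u$j * y$j) - (if j = i then y$j else 0))"
          by (auto simp: fun_eq_iff algebra_simps)
        then show ?thesis by (simp only: sum_subtractf sum_distrib_left) simp
      qed
      also have "\<dots> = reflect x y $ i"
        by (simp add: reflect_def Let_def u_def[symmetric] inner_vec_def mult.commute)
      finally show ?thesis .
    qed
    then show ?thesis by (simp add: vec_eq_iff)
  qed
  show "transpose H = H" by (simp add: H_def transpose_def vec_eq_iff mult.commute)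
  have rr: "reflect x (reflect x y) = y" for y
  proof -
    have r: "reflect x z = (2 * (z \<bullet> u)) *\<^sub>R u - z" for z
      by (simp add: reflect_def Let_def u_def[symmetric])
    have "reflect x y \<bullet> u = y \<bullet> u"
      by (simp add: r inner_diff_left uu)
    then show ?thesis by (simp add: r)
  qed
  show "H ** H = mat 1"
    by (simp add: matrix_eq matrix_vector_mul_assoc[symmetric] Hv rr)
  have r: "reflect x z = (2 * (z \<bullet> u)) *\<^sub>R u - z" for z
    by (simp add: reflect_def Let_def u_def[symmetric])
  have "reflect x x = 2 *\<^sub>R (norm x *\<^sub>R u) - x" by (simp add: r xu)
  also have "\<dots> = x" by (simp add: nxu scaleR_2)
  finally show "H *v x = x" by (simp add: Hv)
  have ip: "reflect x v \<bullet> reflect x w = v \<bullet> w" for v w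
  proof -
    have "reflect x v \<bullet> reflect x w = 4 * (v \<bullet> u) * (w \<bullet> u) * (u \<bullet> u) - 2 * (v \<bullet> u) * (u \<bullet> w) - 2 * (w \<bullet> u) * (v \<bullet> u) + v \<bullet> w"
      by (simp add: r inner_diff_left inner_diff_right inner_commute algebra_simps)
    then show ?thesis by (simp add: uu inner_commute)
  qed
  show "orthogonal_transformation ((*v) H)"
    unfolding orthogonal_transformation_def
    by (simp add: Hv ip matrix_vector_mul_linear)
qed



lemma col_matrix_mul: "col_matrix (\<lambda>j. H *v v j) = H ** col_matrix v"
  by (simp add: col_matrix_def matrix_matrix_mult_def matrix_vector_mult_def vec_eq_iff)

lemma proj_mat_orth:
  assumes "transpose H ** H = mat 1"
  shows "proj_mat (H ** E) = H ** proj_mat E ** transpose H"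
proof -
  have "transpose (H ** E) ** (H ** E) = transpose E ** E"
    by (simp add: matrix_transpose_mul matrix_mul_assoc)
       (metis assms matrix_mul_assoc matrix_mul_rid)
  then show ?thesis
    by (simp add: proj_mat_def matrix_transpose_mul matrix_mul_assoc)
qed

theorem lemma1:
  fixes M :: "'a measure"
    and e :: "'m::finite \<Rightarrow> 'a \<Rightarrow> real^'p::finite"
    and x :: "real^'p"
  assumes "prob_space M"
    and "CARD('m) < CARD('p)"
    and "x \<noteq> 0"
    and "prob_space.indep_vars M (\<lambda>_. borel) e UNIV"
    and "\<And>j. distr M borel (e j) = std_gauss_vec"
  shows "distr M borel (\<lambda>\<omega>. proj_mat (col_matrix (\<lambda>j. e j \<omega>)) *v x)
       = distr M borel (\<lambda>\<omega>. reflect x (proj_mat (col_matrix (\<lambda>j. e j \<omega>)) *v x))"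
proof -
  interpret prob_space M by fact
  define u where "u = x /\<^sub>R norm x"
  define H :: "real^'p^'p" where "H = (\<chi> i j. 2 * u$i * u$j - (if i = j then 1 else 0))"
  note HP = refl_props[OF assms(3), folded u_def, folded H_def]
  have ind: "indep_vars (\<lambda>_. borel) e UNIV" by fact
  have rv: "random_variable borel (e j)" for j using ind by (simp add: indep_vars_def)
  have linH: "linear ((*v) H)" by (simp add: matrix_vector_mul_linear)
  note [measurable] = linear_borel[OF linH]
  have rv2: "random_variable borel (\<lambda>\<omega>. H *v e j \<omega>)" for j using rv[of j] by measurable
  have ind2: "indep_vars (\<lambda>_. borel) (\<lambda>j \<omega>. H *v e j \<omega>) UNIV"
    by (rule indep_vars_compose2[OF ind]) simp
  define F where "F = (\<lambda>f::'m \<Rightarrow> real^'p. proj_mat (col_matrix f) *v x)"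
  define G where "G = (PiM UNIV (\<lambda>_::'m. std_gauss_vec) :: ('m \<Rightarrow> real^'p) measure)"
  have sG: "sets G = sets (PiM UNIV (\<lambda>_::'m. (borel :: (real^'p) measure)))"
    unfolding G_def by (intro sets_PiM_cong) (simp_all add: std_gauss_vec_def)
  have FG: "F \<in> borel_measurable G"
    using F_meas[where x=x] unfolding F_def by (simp add: measurable_cong_sets[OF sG refl])
  have D1: "distr M (PiM UNIV (\<lambda>_. borel)) (\<lambda>\<omega> j. e j \<omega>) = G"
    using indep_vars_iff_distr_eq_PiM[where I=UNIV and M'="\<lambda>_. borel" and X=e, OF _ rv] ind
    by (simp add: restrict_UNIV G_def assms(5))
  have mg: "distr M borel (\<lambda>\<omega>. H *v e j \<omega>) = std_gauss_vec" for j
  proof -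
    have "distr M borel (\<lambda>\<omega>. H *v e j \<omega>) = distr (distr M borel (e j)) borel ((*v) H)"
      using rv[of j] by (simp add: distr_distr comp_def)
    also have "\<dots> = std_gauss_vec" using gauss_orth[OF HP(5)] by (simp add: assms(5))
    finally show ?thesis .
  qed
  have D2: "distr M (PiM UNIV (\<lambda>_. borel)) (\<lambda>\<omega> j. H *v e j \<omega>) = G"
    using indep_vars_iff_distr_eq_PiM[where I=UNIV and M'="\<lambda>_. borel" and X="\<lambda>j \<omega>. H *v e j \<omega>", OF _ rv2] ind2
    by (simp add: restrict_UNIV G_def mg)
  have m1: "(\<lambda>\<omega> j. e j \<omega>) \<in> measurable M (PiM UNIV (\<lambda>_::'m. (borel :: (real^'p) measure)))"
    using rv by (intro measurable_PiM_single') auto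
  have m2: "(\<lambda>\<omega> j. H *v e j \<omega>) \<in> measurable M (PiM UNIV (\<lambda>_::'m. (borel :: (real^'p) measure)))"
    using rv2 by (intro measurable_PiM_single') auto
  have FP: "F \<in> borel_measurable (PiM UNIV (\<lambda>_::'m. (borel :: (real^'p) measure)))"
    using F_meas[where x=x] unfolding F_def .
  have pw: "reflect x (F (\<lambda>j. e j \<omega>)) = F (\<lambda>j. H *v e j \<omega>)" for \<omega>
  proof -
    have tH: "transpose H ** H = mat 1" using HP by simp
    have "F (\<lambda>j. H *v e j \<omega>) = (H ** proj_mat (col_matrix (\<lambda>j. e j \<omega>)) ** transpose H) *v x"
      by (simp add: F_def col_matrix_mul proj_mat_orth[OF tH])
    also have "\<dots> = H *v (proj_mat (col_matrix (\<lambda>j. e j \<omega>)) *v (H *v x))"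
      by (simp only: matrix_vector_mul_assoc matrix_mul_assoc HP(2))
    also have "\<dots> = reflect x (F (\<lambda>j. e j \<omega>))"
      by (simp only: HP(4)) (simp only: HP(1) F_def)
    finally show ?thesis by simp
  qed
  have "distr M borel (\<lambda>\<omega>. F (\<lambda>j. e j \<omega>)) = distr G borel F"
    using distr_distr[OF FP m1] D1 by (simp add: comp_def)
  also have "\<dots> = distr M borel (\<lambda>\<omega>. F (\<lambda>j. H *v e j \<omega>))"
    using distr_distr[OF FP m2] D2 by (simp add: comp_def)
  finally have fin: "distr M borel (\<lambda>\<omega>. F (\<lambda>j. e j \<omega>)) = distr M borel (\<lambda>\<omega>. F (\<lambda>j. H *v e j \<omega>))" .
  have "(\<lambda>\<omega>. reflect x (F (\<lambda>j. e j \<omega>))) = (\<lambda>\<omega>. F (\<lambda>j. H *v e j \<omega>))"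
    using pw by auto
  with fin show ?thesis unfolding F_def by simp
qed


end
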